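(* Let $K$ be a field with $\operatorname{char}(K)\neq2$ and let $M$ be a Leibniz $K$-algebra. Let $M\star M$ be the Leibniz $K$-algebra generated by symbols $m_1\otimes m_2$ and $m_1\circledast m_2$ ($m_1,m_2\in M$), both $K$-bilinear in their arguments, subject to the relations, for all $m_1,m_2,m_3,m_4\in M$: $m_1\otimes[m_2,m_3]=[m_1,m_2]\otimes m_3-[m_1,m_3]\otimes m_2$; $m_1\circledast[m_2,m_3]=[m_1,m_2]\circledast m_3-[m_1,m_3]\circledast m_2$; $[m_1,m_2]\otimes m_3=[m_1,m_3]\circledast m_2-m_1\otimes[m_3,m_2]$; $[m_1,m_2]\circledast m_3=[m_1,m_3]\otimes m_2-m_1\circledast[m_3,m_2]$; $m_1\otimes[m_2,m_3]=-m_1\otimes[m_3,m_2]$; $m_1\circledast[m_2,m_3]=-m_1\circledast[m_3,m_2]$; and, for every choice of symbols $\diamond,\diamond'\in\{\otimes,\circledast\}$, $[m_1,m_2]\otimes[m_3,m_4]=[m_1\diamond m_2,m_3\diamond' m_4]=[m_1,m_2]\circledast[m_3,m_4]$. Consider the crossed module of Leibniz $K$-algebras $(M\star M,M,(\cdot_1,\cdot_2),\partial)$ with, on generators, $m\cdot_1(m_1\otimes m_2)=[m,m_1]\otimes m_2-[m,m_2]\circledast m_1$, $m\cdot_1(m_1\circledast m_2)=[m,m_1]\circledast m_2-[m,m_2]\otimes m_1$, $(m_1\otimes m_2)\cdot_2m=[m_1,m]\otimes m_2+m_1\otimes[m_2,m]$, $(m_1\circledast m_2)\cdot_2m=[m_1,m]\circledast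 m_2+m_1\circledast[m_2,m]$, and $\partial(m_1\otimes m_2)=[m_1,m_2]=\partial(m_1\circledast m_2)$. Then the pair of $K$-bilinear maps $\{-,-\},\langle-,-\rangle\colon M\times M\to M\star M$, $\{m_1,m_2\}=m_1\otimes m_2$, $\langle m_1,m_2\rangle=m_1\circledast m_2$, is a braiding on this crossed module.
   Context: A Leibniz $K$-algebra: bilinear bracket with $[x,[y,z]]=[[x,y],z]-[[x,z],y]$. A crossed module of Leibniz algebras $(L,N,(\cdot_1,\cdot_2),\partial)$ consists of bilinear maps $\cdot_1\colon N\times L\to L$, $\cdot_2\colon L\times N\to L$ forming a Leibniz action and a Leibniz homomorphism $\partial\colon L\to N$ with $\partial(n\cdot_1l)=[n,\partial l]$, $\partial(l\cdot_2n)=[\partial l,n]$, $\partial(l)\cdot_1l'=[l,l']=l\cdot_2\partial(l')$. A braiding on it is a pair of bilinear maps $\{-,-\},\langle-,-\rangle\colon N\times N\to L$ with, for all $l,l'\in L$, $n,n',n''\in N$: $\partial\{n,n'\}=[n,n']=\partial\langle n,n'\rangle$; $\{\partial l,\partial l'\}=[l,l']=\langle\partial l,\partial l'\rangle$; $\{\partial l,n\}=l\cdot_2n=\langle\partial l,n\rangle$; $\{n,\partial l\}=n\cdot_1l=\langle n,\partial l\rangle$; $\{n,[n',n'']\}=\{[n,n'],n''\}-\{[n,n''],n'\}$; $\langle n,[n',n'']\rangle=\{[n,n'],n''\}-\langle[n,n''],n'\rangle$; $\{n,[n',n'']\}=\{[n,n'],n''\}-\langle[n,n''],n'\rangle$;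 $\langle n,[n',n'']\rangle=\langle[n,n'],n''\rangle-\langle[n,n''],n'\rangle$. (The structure $(M\star M,M,(\cdot_1,\cdot_2),\partial)$ above is the non-abelian tensor product of $M$ with itself for the bracket actions, and is known to be a crossed module of Leibniz algebras.) *)

theory Defs
  imports Complex_Main
begin

text \<open>Leibniz K-algebras are modelled on a whole type: the additive group is the
type class structure, the scalar multiplication and the bracket are parameters.\<close>

definition leibniz_algebra :: "('k::field \<Rightarrow> 'a::ab_group_add \<Rightarrow> 'a) \<Rightarrow> ('a \<Rightarrow> 'a \<Rightarrow> 'a) \<Rightarrow> bool" where
  "leibniz_algebra sc br \<longleftrightarrow> vector_space sc
     \<and> (\<forall>x y z. br x (y + z) = br x y + br x z)
     \<and> (\<forall>x y z. br (x + y) z = br x z + br y z)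
     \<and> (\<forall>c x y. br (sc c x) y = sc c (br x y))
     \<and> (\<forall>c x y. br x (sc c y) = sc c (br x y))
     \<and> (\<forall>x y z. br x (br y z) = br (br x y) z - br (br x z) y)"

definition bilin :: "('k::field \<Rightarrow> 'a::ab_group_add \<Rightarrow> 'a) \<Rightarrow> ('k \<Rightarrow> 'b::ab_group_add \<Rightarrow> 'b)
    \<Rightarrow> ('k \<Rightarrow> 'c::ab_group_add \<Rightarrow> 'c) \<Rightarrow> ('a \<Rightarrow> 'b \<Rightarrow> 'c) \<Rightarrow> bool" where
  "bilin s1 s2 s3 f \<longleftrightarrow> (\<forall>x. Vector_Spaces.linear s2 s3 (f x))
                      \<and> (\<forall>y. Vector_Spaces.linear s1 s3 (\<lambda>x. f x y))"

definition leibniz_hom :: "('k::field \<Rightarrow> 'a::ab_group_add \<Rightarrow> 'a) \<Rightarrow> ('a \<Rightarrow> 'a \<Rightarrow> 'a)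
    \<Rightarrow> ('k \<Rightarrow> 'b::ab_group_add \<Rightarrow> 'b) \<Rightarrow> ('b \<Rightarrow> 'b \<Rightarrow> 'b) \<Rightarrow> ('a \<Rightarrow> 'b) \<Rightarrow> bool" where
  "leibniz_hom s1 b1 s2 b2 h \<longleftrightarrow> Vector_Spaces.linear s1 s2 h \<and> (\<forall>x y. h (b1 x y) = b2 (h x) (h y))"

inductive_set leibniz_span :: "('k::field \<Rightarrow> 'a::ab_group_add \<Rightarrow> 'a) \<Rightarrow> ('a \<Rightarrow> 'a \<Rightarrow> 'a) \<Rightarrow> 'a set \<Rightarrow> 'a set"
  for sc br S where
    gen: "x \<in> S \<Longrightarrow> x \<in> leibniz_span sc br S"
  | zero: "0 \<in> leibniz_span sc br S"
  | add: "x \<in> leibniz_span sc br S \<Longrightarrow> y \<in> leibniz_span sc br S \<Longrightarrow> x + y \<in> leibniz_span sc br S"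
  | scale: "x \<in> leibniz_span sc br S \<Longrightarrow> sc c x \<in> leibniz_span sc br S"
  | brk: "x \<in> leibniz_span sc br S \<Longrightarrow> y \<in> leibniz_span sc br S \<Longrightarrow> br x y \<in> leibniz_span sc br S"

text \<open>The defining relations of the non-abelian tensor square M \<star> M, for bilinear
maps tens (m1 \<otimes> m2) and circ (m1 \<circledast> m2) into a Leibniz algebra with bracket brT.\<close>
definition star_relations :: "('m \<Rightarrow> 'm \<Rightarrow> 'm) \<Rightarrow> ('t::ab_group_add \<Rightarrow> 't \<Rightarrow> 't)
    \<Rightarrow> ('m \<Rightarrow> 'm \<Rightarrow> 't) \<Rightarrow> ('m \<Rightarrow> 'm \<Rightarrow> 't) \<Rightarrow> bool" where
  "star_relations brM brT tens circ \<longleftrightarrow>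
     (\<forall>m1 m2 m3 m4.
        tens m1 (brM m2 m3) = tens (brM m1 m2) m3 - tens (brM m1 m3) m2
      \<and> circ m1 (brM m2 m3) = circ (brM m1 m2) m3 - circ (brM m1 m3) m2
      \<and> tens (brM m1 m2) m3 = circ (brM m1 m3) m2 - tens m1 (brM m3 m2)
      \<and> circ (brM m1 m2) m3 = tens (brM m1 m3) m2 - circ m1 (brM m3 m2)
      \<and> tens m1 (brM m2 m3) = - tens m1 (brM m3 m2)
      \<and> circ m1 (brM m2 m3) = - circ m1 (brM m3 m2)
      \<and> (\<forall>d1 \<in> {tens, circ}. \<forall>d2 \<in> {tens, circ}.
            tens (brM m1 m2) (brM m3 m4) = brT (d1 m1 m2) (d2 m3 m4)
          \<and> brT (d1 m1 m2) (d2 m3 m4) = circ (brM m1 m2) (brM m3 m4)))"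

text \<open>(T, scT, brT, tens, circ) is the Leibniz algebra presented by the generators
and relations above: it satisfies them, is generated by the symbols, and is universal
(here: with respect to all Leibniz algebras living on the type 'c).\<close>
definition is_star_square :: "'c::ab_group_add itself \<Rightarrow> ('k::field \<Rightarrow> 'm::ab_group_add \<Rightarrow> 'm) \<Rightarrow> ('m \<Rightarrow> 'm \<Rightarrow> 'm)
    \<Rightarrow> ('k \<Rightarrow> 't::ab_group_add \<Rightarrow> 't) \<Rightarrow> ('t \<Rightarrow> 't \<Rightarrow> 't)
    \<Rightarrow> ('m \<Rightarrow> 'm \<Rightarrow> 't) \<Rightarrow> ('m \<Rightarrow> 'm \<Rightarrow> 't) \<Rightarrow> bool" where
  "is_star_square (_::'c itself) scM brM scT brT tens circ \<longleftrightarrow>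
     leibniz_algebra scT brT
   \<and> bilin scM scM scT tens \<and> bilin scM scM scT circ
   \<and> star_relations brM brT tens circ
   \<and> leibniz_span scT brT (range (case_prod tens) \<union> range (case_prod circ)) = UNIV
   \<and> (\<forall>(scC :: 'k \<Rightarrow> 'c \<Rightarrow> 'c) brC f g.
        leibniz_algebra scC brC \<and> bilin scM scM scC f \<and> bilin scM scM scC g
        \<and> star_relations brM brC f g \<longrightarrow>
        (\<exists>!h. leibniz_hom scT brT scC brC h
              \<and> (\<forall>a b. h (tens a b) = f a b) \<and> (\<forall>a b. h (circ a b) = g a b)))"

definition leibniz_action :: "('k::field \<Rightarrow> 'l::ab_group_add \<Rightarrow> 'l) \<Rightarrow> ('l \<Rightarrow> 'l \<Rightarrow> 'l)
    \<Rightarrow> ('k \<Rightarrow> 'n::ab_group_add \<Rightarrow> 'n) \<Rightarrow> ('n \<Rightarrow> 'n \<Rightarrow> 'n)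
    \<Rightarrow> ('n \<Rightarrow> 'l \<Rightarrow> 'l) \<Rightarrow> ('l \<Rightarrow> 'n \<Rightarrow> 'l) \<Rightarrow> bool" where
  "leibniz_action scL brL scN brN act1 act2 \<longleftrightarrow>
     bilin scN scL scL act1 \<and> bilin scL scN scL act2
   \<and> (\<forall>l n n'. act2 l (brN n n') = act2 (act2 l n) n' - act2 (act2 l n') n)
   \<and> (\<forall>l n n'. act1 n (act2 l n') = act2 (act1 n l) n' - act1 (brN n n') l)
   \<and> (\<forall>l n n'. act1 n (act1 n' l) = act1 (brN n n') l - act2 (act1 n l) n')
   \<and> (\<forall>l l' n. brL l (act2 l' n) = act2 (brL l l') n - brL (act2 l n) l')
   \<and> (\<forall>l l' n. brL l (act1 n l') = brL (act2 l n) l' - act2 (brL l l') n)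
   \<and> (\<forall>l l' n. act1 n (brL l l') = brL (act1 n l) l' - brL (act1 n l') l)"

definition leibniz_crossed_module :: "('k::field \<Rightarrow> 'l::ab_group_add \<Rightarrow> 'l) \<Rightarrow> ('l \<Rightarrow> 'l \<Rightarrow> 'l)
    \<Rightarrow> ('k \<Rightarrow> 'n::ab_group_add \<Rightarrow> 'n) \<Rightarrow> ('n \<Rightarrow> 'n \<Rightarrow> 'n)
    \<Rightarrow> ('n \<Rightarrow> 'l \<Rightarrow> 'l) \<Rightarrow> ('l \<Rightarrow> 'n \<Rightarrow> 'l) \<Rightarrow> ('l \<Rightarrow> 'n) \<Rightarrow> bool" where
  "leibniz_crossed_module scL brL scN brN act1 act2 d \<longleftrightarrow>
     leibniz_algebra scL brL \<and> leibniz_algebra scN brN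
   \<and> leibniz_action scL brL scN brN act1 act2
   \<and> leibniz_hom scL brL scN brN d
   \<and> (\<forall>n l. d (act1 n l) = brN n (d l))
   \<and> (\<forall>n l. d (act2 l n) = brN (d l) n)
   \<and> (\<forall>l l'. act1 (d l) l' = brL l l' \<and> brL l l' = act2 l (d l'))"

definition leibniz_braiding :: "('k::field \<Rightarrow> 'l::ab_group_add \<Rightarrow> 'l) \<Rightarrow> ('l \<Rightarrow> 'l \<Rightarrow> 'l)
    \<Rightarrow> ('k \<Rightarrow> 'n::ab_group_add \<Rightarrow> 'n) \<Rightarrow> ('n \<Rightarrow> 'n \<Rightarrow> 'n)
    \<Rightarrow> ('n \<Rightarrow> 'l \<Rightarrow> 'l) \<Rightarrow> ('l \<Rightarrow> 'n \<Rightarrow> 'l) \<Rightarrow> ('l \<Rightarrow> 'n)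
    \<Rightarrow> ('n \<Rightarrow> 'n \<Rightarrow> 'l) \<Rightarrow> ('n \<Rightarrow> 'n \<Rightarrow> 'l) \<Rightarrow> bool" where
  "leibniz_braiding scL brL scN brN act1 act2 d B A \<longleftrightarrow>
     bilin scN scN scL B \<and> bilin scN scN scL A
   \<and> (\<forall>n n'. d (B n n') = brN n n' \<and> brN n n' = d (A n n'))
   \<and> (\<forall>l l'. B (d l) (d l') = brL l l' \<and> brL l l' = A (d l) (d l'))
   \<and> (\<forall>l n. B (d l) n = act2 l n \<and> act2 l n = A (d l) n)
   \<and> (\<forall>l n. B n (d l) = act1 n l \<and> act1 n l = A n (d l))
   \<and> (\<forall>n n' n''.
        B n (brN n' n'') = B (brN n n') n'' - B (brN n n'') n'
      \<and> A n (brN n' n'') = B (brN n n') n'' - A (brN n n'') n'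
      \<and> B n (brN n' n'') = B (brN n n') n'' - A (brN n n'') n'
      \<and> A n (brN n' n'') = A (brN n n') n'' - A (brN n n'') n')"

end

theory Submission
  imports Defs
begin

lemma addhom_zero: assumes "\<And>x y. f (x + y) = f x + f y" shows "f (0::'a::ab_group_add) = (0::'b::ab_group_add)"
proof -
  have "f (0 + 0) = f 0 + f 0" by (rule assms)
  then have "f 0 = f 0 + f 0" by simp
  then show ?thesis using add_cancel_right_right by blast
qed

lemma addhom_diff: assumes "\<And>x y. f (x + y) = f x + f y" shows "f ((x::'a::ab_group_add) - y) = f x - (f y::'b::ab_group_add)"
proof -
  have "f ((x - y) + y) = f (x - y) + f y" by (rule assms)
  then show ?thesis by (simp add: algebra_simps)
qed

lemma lin_add: "Vector_Spaces.linear s1 s2 f \<Longrightarrow> f (x + y) = f x + f y"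
  by (simp add: Vector_Spaces.linear_iff)
lemma lin_scale: "Vector_Spaces.linear s1 s2 f \<Longrightarrow> f (s1 c x) = s2 c (f x)"
  by (simp add: Vector_Spaces.linear_iff)
lemma lin_zero: "Vector_Spaces.linear s1 s2 f \<Longrightarrow> f 0 = 0"
  by (rule addhom_zero) (simp add: Vector_Spaces.linear_iff)
lemma lin_diff: "Vector_Spaces.linear s1 s2 f \<Longrightarrow> f (x - y) = f x - f y"
  by (rule addhom_diff) (simp add: Vector_Spaces.linear_iff)

lemma two_zero:
  fixes sc :: "'k::field \<Rightarrow> 'a::ab_group_add \<Rightarrow> 'a" and D :: 'a
  assumes vs: "vector_space sc" and c: "(2::'k) \<noteq> 0" and h: "D + D = 0"
  shows "D = 0"
proof -
  interpret vector_space sc by (rule vs)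
  have "sc 2 D = sc (1 + 1) D" by simp
  also have "\<dots> = D + D" by (simp only: scale_left_distrib scale_one)
  finally have "sc 2 D = 0" using h by simp
  then show ?thesis using c scale_eq_0_iff by blast
qed

theorem mainTheorem8:
  fixes scM :: "'k::field \<Rightarrow> 'm::ab_group_add \<Rightarrow> 'm" and brM :: "'m \<Rightarrow> 'm \<Rightarrow> 'm"
    and scT :: "'k \<Rightarrow> 't::ab_group_add \<Rightarrow> 't" and brT :: "'t \<Rightarrow> 't \<Rightarrow> 't"
    and tens circ :: "'m \<Rightarrow> 'm \<Rightarrow> 't"
    and act1 :: "'m \<Rightarrow> 't \<Rightarrow> 't" and act2 :: "'t \<Rightarrow> 'm \<Rightarrow> 't" and d :: "'t \<Rightarrow> 'm"
  assumes char: "(2::'k) \<noteq> 0"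
    and M: "leibniz_algebra scM brM"
    and star: "is_star_square TYPE('c::ab_group_add) scM brM scT brT tens circ"
    and xmod: "leibniz_crossed_module scT brT scM brM act1 act2 d"
    and act1_tens: "\<And>m m1 m2. act1 m (tens m1 m2) = tens (brM m m1) m2 - circ (brM m m2) m1"
    and act1_circ: "\<And>m m1 m2. act1 m (circ m1 m2) = circ (brM m m1) m2 - tens (brM m m2) m1"
    and act2_tens: "\<And>m m1 m2. act2 (tens m1 m2) m = tens (brM m1 m) m2 + tens m1 (brM m2 m)"
    and act2_circ: "\<And>m m1 m2. act2 (circ m1 m2) m = circ (brM m1 m) m2 + circ m1 (brM m2 m)"
    and d_tens: "\<And>m1 m2. d (tens m1 m2) = brM m1 m2"
    and d_circ: "\<And>m1 m2. d (circ m1 m2) = brM m1 m2"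
  shows "leibniz_braiding scT brT scM brM act1 act2 d tens circ"
proof -
  have LT: "leibniz_algebra scT brT" and bt: "bilin scM scM scT tens" and bc: "bilin scM scM scT circ"
    and rels: "star_relations brM brT tens circ"
    and span: "leibniz_span scT brT (range (case_prod tens) \<union> range (case_prod circ)) = UNIV"
    using star unfolding is_star_square_def by blast+
  have vsT: "vector_space scT" using LT unfolding leibniz_algebra_def by blast
  have r1: "\<And>a b c. tens a (brM b c) = tens (brM a b) c - tens (brM a c) b"
   and r2: "\<And>a b c. circ a (brM b c) = circ (brM a b) c - circ (brM a c) b"
   and r3: "\<And>a b c. tens (brM a b) c = circ (brM a c) b - tens a (brM c b)"
   and r4: "\<And>a b c. circ (brM a b) c = tens (brM a c) b - circ a (brM c b)"
   and r5: "\<And>a b c. tens a (brM b c) = - tens a (brM c b)"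
   and r6: "\<And>a b c. circ a (brM b c) = - circ a (brM c b)"
    using rels unfolding star_relations_def by blast+
  have E1: "\<And>a b c. tens a (brM b c) = circ a (brM b c)"
  proof -
    fix a b c
    have "tens a (brM c b) = circ (brM a c) b - tens (brM a b) c"
      using r3[of a b c] by simp
    also have "\<dots> = - circ a (brM b c)" using r4[of a c b] by simp
    finally have "tens a (brM c b) = - circ a (brM b c)" .
    then show "tens a (brM b c) = circ a (brM b c)" using r5[of a b c] by simp
  qed
  have E2: "\<And>a b c. tens (brM a b) c = circ (brM a b) c"
  proof -
    fix a b c
    define D where "D = (\<lambda>b c. tens (brM a b) c - circ (brM a b) c)"
    have "D b c = (circ (brM a c) b - tens a (brM c b)) - (tens (brM a c) b - circ a (brM c b))"
      unfolding D_def using r3[of a b c] r4[of a b c] by simp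
    also have "\<dots> = - D c b" unfolding D_def using E1[of a c b] by simp
    finally have anti: "D b c = - D c b" .
    have "D b c - D c b = tens a (brM b c) - circ a (brM b c)"
      unfolding D_def using r1[of a b c] r2[of a b c] by simp
    also have "\<dots> = 0" using E1[of a b c] by simp
    finally have sym: "D b c - D c b = 0" .
    have anti2: "D c b = - D b c" using anti by simp
    have "D b c + D b c = D b c - D c b" unfolding anti2 by simp
    then have "D b c + D b c = 0" using sym by simp
    then have "D b c = 0" by (rule two_zero[OF vsT char])
    then show "tens (brM a b) c = circ (brM a b) c" unfolding D_def by simp
  qed
  have dhom: "leibniz_hom scT brT scM brM d"
   and dact1: "\<And>n l. d (act1 n l) = brM n (d l)"
   and dact2: "\<And>n l. d (act2 l n) = brM (d l) n"
   and x1: "\<And>l l'. act1 (d l) l' = brT l l'"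
   and x2: "\<And>l l'. brT l l' = act2 l (d l')"
   and act: "leibniz_action scT brT scM brM act1 act2"
    using xmod unfolding leibniz_crossed_module_def by blast+
  have dlin: "Vector_Spaces.linear scT scM d" and dbr: "\<And>x y. d (brT x y) = brM (d x) (d y)"
    using dhom unfolding leibniz_hom_def by blast+
  have ba1: "bilin scM scT scT act1" and ba2: "bilin scT scM scT act2"
   and a1br: "\<And>l l' n. act1 n (brT l l') = brT (act1 n l) l' - brT (act1 n l') l"
   and a2br: "\<And>l l' n. brT l (act2 l' n) = act2 (brT l l') n - brT (act2 l n) l'"
    using act unfolding leibniz_action_def by blast+
  have tl2: "\<And>x. Vector_Spaces.linear scM scT (tens x)" and tl1: "\<And>y. Vector_Spaces.linear scM scT (\<lambda>x. tens x y)"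
    using bt unfolding bilin_def by blast+
  have cl2: "\<And>x. Vector_Spaces.linear scM scT (circ x)" and cl1: "\<And>y. Vector_Spaces.linear scM scT (\<lambda>x. circ x y)"
    using bc unfolding bilin_def by blast+
  have a1l2: "\<And>x. Vector_Spaces.linear scT scT (act1 x)"
    using ba1 unfolding bilin_def by blast+
  have a2l1: "\<And>y. Vector_Spaces.linear scT scT (\<lambda>x. act2 x y)"
    using ba2 unfolding bilin_def by blast+
  have allspan: "\<And>l. l \<in> leibniz_span scT brT (range (case_prod tens) \<union> range (case_prod circ))"
    using span by blast
  have C4: "\<And>n. tens n (d l) = act1 n l" for l
    using allspan[of l]
  proof (induction l rule: leibniz_span.induct)
    case (gen x)
    then show ?case
    proof
      assume "x \<in> range (case_prod tens)"
      then obtain a b where x: "x = tens a b" by auto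
      show ?thesis unfolding x d_tens act1_tens using r3[of n a b] r5[of n b a] by (simp add: algebra_simps)
    next
      assume "x \<in> range (case_prod circ)"
      then obtain a b where x: "x = circ a b" by auto
      show ?thesis unfolding x d_circ act1_circ using r3[of n b a] by (simp add: algebra_simps)
    qed
  next
    case zero
    then show ?case using lin_zero[OF dlin] lin_zero[OF tl2] lin_zero[OF a1l2] by simp
  next
    case (add x y)
    then show ?case using lin_add[OF dlin] lin_add[OF tl2] lin_add[OF a1l2] by simp
  next
    case (scale x c)
    then show ?case using lin_scale[OF dlin] lin_scale[OF tl2] lin_scale[OF a1l2] by simp
  next
    case (brk x y)
    have "tens n (d (brT x y)) = tens (brM n (d x)) (d y) - tens (brM n (d y)) (d x)"
      using dbr r1 by simp
    also have "\<dots> = act1 (brM n (d x)) y - act1 (brM n (d y)) x" using brk.IH by simp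
    also have "\<dots> = act1 (d (act1 n x)) y - act1 (d (act1 n y)) x" using dact1 by simp
    also have "\<dots> = act1 n (brT x y)" using x1 a1br by simp
    finally show ?case .
  qed
  have C4c: "circ n (d l) = act1 n l" for n l
  proof -
    have "circ n (d l) = tens n (d l)"
      using allspan[of l]
    proof (induction l rule: leibniz_span.induct)
      case (gen x)
      then show ?case using E1 d_tens d_circ by auto
    next
      case zero
      then show ?case using lin_zero[OF dlin] lin_zero[OF tl2] lin_zero[OF cl2] by simp
    next
      case (add x y)
      then show ?case using lin_add[OF dlin] lin_add[OF tl2] lin_add[OF cl2] by simp
    next
      case (scale x c)
      then show ?case using lin_scale[OF dlin] lin_scale[OF tl2] lin_scale[OF cl2] by simp
    next
      case (brk x y)
      then show ?case using E1 dbr by simp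
    qed
    then show ?thesis using C4 by simp
  qed
  have C5: "\<And>n. tens (d l) n = act2 l n" for l
    using allspan[of l]
  proof (induction l rule: leibniz_span.induct)
    case (gen x)
    then show ?case
    proof
      assume "x \<in> range (case_prod tens)"
      then obtain a b where x: "x = tens a b" by auto
      show ?thesis unfolding x d_tens act2_tens using r1[of a b n] by (simp add: algebra_simps)
    next
      assume "x \<in> range (case_prod circ)"
      then obtain a b where x: "x = circ a b" by auto
      show ?thesis unfolding x d_circ act2_circ using r2[of a b n] E2[of a b n] by (simp add: algebra_simps)
    qed
  next
    case zero
    then show ?case using lin_zero[OF dlin] lin_zero[OF tl1] lin_zero[OF a2l1] by simp
  next
    case (add x y)
    then show ?case using lin_add[OF dlin] lin_add[OF tl1] lin_add[OF a2l1] by simp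
  next
    case (scale x c)
    then show ?case using lin_scale[OF dlin] lin_scale[OF tl1] lin_scale[OF a2l1] by simp
  next
    case (brk x y)
    have "tens (d (brT x y)) n = tens (d x) (brM (d y) n) + tens (brM (d x) n) (d y)"
      using dbr r1[of "d x" "d y" n] by (simp add: algebra_simps)
    also have "\<dots> = act2 x (brM (d y) n) + act1 (brM (d x) n) y" using brk.IH C4 by simp
    also have "\<dots> = act2 x (d (act2 y n)) + act1 (d (act2 x n)) y" using dact2 by simp
    also have "\<dots> = brT x (act2 y n) + brT (act2 x n) y" using x1 x2 by simp
    also have "\<dots> = act2 (brT x y) n" using a2br[of x y n] by (simp add: algebra_simps)
    finally show ?case .
  qed
  have C5c: "circ (d l) n = act2 l n" for n l
  proof -
    have "circ (d l) n = tens (d l) n"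
      using allspan[of l]
    proof (induction l rule: leibniz_span.induct)
      case (gen x)
      then show ?case using E2 d_tens d_circ by auto
    next
      case zero
      then show ?case using lin_zero[OF dlin] lin_zero[OF tl1] lin_zero[OF cl1] by simp
    next
      case (add x y)
      then show ?case using lin_add[OF dlin] lin_add[OF tl1] lin_add[OF cl1] by simp
    next
      case (scale x c)
      then show ?case using lin_scale[OF dlin] lin_scale[OF tl1] lin_scale[OF cl1] by simp
    next
      case (brk x y)
      then show ?case using E2 dbr by simp
    qed
    then show ?thesis using C5 by simp
  qed
  show ?thesis
    unfolding leibniz_braiding_def
  proof (intro conjI allI)
    show "bilin scM scM scT tens" "bilin scM scM scT circ" by (fact bt, fact bc)
  next
    fix n n' show "d (tens n n') = brM n n'" "brM n n' = d (circ n n')" using d_tens d_circ by simp_all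
  next
    fix l l' show "tens (d l) (d l') = brT l l'" "brT l l' = circ (d l) (d l')"
      using C4 C4c x1 by simp_all
  next
    fix l n show "tens (d l) n = act2 l n" "act2 l n = circ (d l) n" using C5 C5c by simp_all
  next
    fix l n show "tens n (d l) = act1 n l" "act1 n l = circ n (d l)" using C4 C4c by simp_all
  next
    fix n n' n''
    show "tens n (brM n' n'') = tens (brM n n') n'' - tens (brM n n'') n'" by (rule r1)
    show "circ n (brM n' n'') = tens (brM n n') n'' - circ (brM n n'') n'"
    proof -
      have "circ n (brM n' n'') = tens n (brM n' n'')" by (rule E1[symmetric])
      also have "\<dots> = tens (brM n n') n'' - tens (brM n n'') n'" by (rule r1)
      finally show ?thesis using E2[of n n'' n'] by simp
    qed
    show "tens n (brM n' n'') = tens (brM n n') n'' - circ (brM n n'') n'"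
      using r1[of n n' n''] E2[of n n'' n'] by simp
    show "circ n (brM n' n'') = circ (brM n n') n'' - circ (brM n n'') n'" by (rule r2)
  qed
qed

end
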